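(* Let $k\ge 2$ and let $\mathcal{C}$ be the full flag code on $\mathbb{F}_q^{2k}$ constructed from a $k$-spread as described in the context. Let $\mathcal{F}=(\mathcal{F}_1,\ldots,\mathcal{F}_{2k-1})\in\mathcal{C}$ and let $\mathcal{X}=(\mathcal{X}_1,\ldots,\mathcal{X}_{2k-1})$ be a sequence of subspaces with $\mathcal{X}_i\subseteq\mathcal{F}_i$ for all $i$ and $\mathcal{X}_1=\cdots=\mathcal{X}_k=\{0\}$. Suppose there is $i\in\{k+1,\ldots,2k-1\}$ with $\dim\mathcal{X}_i>2(i-k)$, and let $i$ be the minimum such index. Then $\mathcal{F}$ is the unique flag $\mathcal{G}=(\mathcal{G}_1,\ldots,\mathcal{G}_{2k-1})\in\mathcal{C}$ with $\mathcal{X}_i\subseteq\mathcal{G}_i$.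
   Context: $q$ is a prime power. Construction: let $\{\mathcal{S}_1,\ldots,\mathcal{S}_{q^k+1}\}$ be a $k$-spread of $\mathbb{F}_q^{2k}$ (a set of $q^k+1$ $k$-dimensional subspaces pairwise intersecting trivially), with full-rank $k\times 2k$ generator matrices $\mathrm{S}_i$ (row space $\mathcal{S}_i$). Let $\mathrm{W}_i=\begin{pmatrix}\mathrm{S}_i\\ \mathrm{S}_{i+1}\end{pmatrix}$ for $i\le q^k$ and $\mathrm{W}_{q^k+1}=\begin{pmatrix}\mathrm{S}_{q^k+1}\\ \mathrm{S}_1\end{pmatrix}$, let $\mathcal{W}_i^{(j)}$ be the row space of the first $j$ rows of $\mathrm{W}_i$, and $\mathcal{C}=\{(\mathcal{W}_i^{(1)},\ldots,\mathcal{W}_i^{(2k-1)}): 1\le i\le q^k+1\}$. *)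

theory Defs
  imports "HOL-Analysis.Analysis"
begin

text \<open>Vectors of F_q^(2k) are elements of 'a^'n with CARD('n) = 2k, 'a a finite field.
  A k x 2k generator matrix is given by its rows: S i j for j < k.\<close>

definition row_space :: "(nat \<Rightarrow> 'a::field^'n) \<Rightarrow> nat \<Rightarrow> ('a^'n) set" where
  "row_space M r = vec.span {M j | j. j < r}"

definition is_spread_gen :: "nat \<Rightarrow> (nat \<Rightarrow> nat \<Rightarrow> 'a::{finite,field}^'n) \<Rightarrow> bool" where
  "is_spread_gen k S \<longleftrightarrow>
     (\<forall>i\<in>{1..CARD('a)^k+1}. vec.dim (row_space (S i) k) = k) \<and>
     (\<forall>i\<in>{1..CARD('a)^k+1}. \<forall>i'\<in>{1..CARD('a)^k+1}. i \<noteq> i' \<longrightarrow>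
        row_space (S i) k \<inter> row_space (S i') k = {0})"

definition spread_next :: "nat \<Rightarrow> nat \<Rightarrow> nat \<Rightarrow> nat" where
  "spread_next q k i = (if i \<le> q^k then i + 1 else 1)"

definition W_rows :: "nat \<Rightarrow> (nat \<Rightarrow> nat \<Rightarrow> 'a::{finite,field}^'n) \<Rightarrow> nat \<Rightarrow> nat \<Rightarrow> 'a^'n" where
  "W_rows k S i r = (if r < k then S i r else S (spread_next CARD('a) k i) (r - k))"

text \<open>W_i^(j): row space of the first j rows of W_i; the j-th subspace of the i-th flag of C.\<close>
definition Wsub :: "nat \<Rightarrow> (nat \<Rightarrow> nat \<Rightarrow> 'a::{finite,field}^'n) \<Rightarrow> nat \<Rightarrow> nat \<Rightarrow> ('a^'n) set" where
  "Wsub k S i j = row_space (W_rows k S i) j"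

end

theory Submission
  imports Defs
begin

lemma Wsub_sub: "vec.subspace (Wsub k S i m)"
  unfolding Wsub_def row_space_def by (rule vec.subspace_span)

lemma Wsub_dim: "vec.dim (Wsub k S i m) \<le> m"
proof -
  have "Wsub k S i m \<subseteq> vec.span (W_rows k S i ` {..<m})"
    unfolding Wsub_def row_space_def
    by (rule vec.span_mono) auto
  then have "vec.dim (Wsub k S i m) \<le> card (W_rows k S i ` {..<m})"
    by (rule vec.dim_le_card) simp
  also have "\<dots> \<le> m" using card_image_le[of "{..<m}" "W_rows k S i"] by simp
  finally show ?thesis .
qed

lemma Wsub_contains: "k \<le> m \<Longrightarrow> row_space (S i) k \<subseteq> Wsub k S i m"
  unfolding Wsub_def row_space_def W_rows_def
  by (rule vec.span_mono) force

lemma key_dim: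
  fixes U V A B :: "('a::field^'n) set"
  assumes sU: "vec.subspace U" and sV: "vec.subspace V" and sA: "vec.subspace A" and sB: "vec.subspace B"
    and AU: "A \<subseteq> U" and BV: "B \<subseteq> V" and AB: "A \<inter> B = {0}"
    and dA: "vec.dim A = k" and dB: "vec.dim B = k"
    and dU: "vec.dim U \<le> m" and dV: "vec.dim V \<le> m"
  shows "vec.dim (U \<inter> V) \<le> 2 * (m - k)"
proof -
  have e1: "vec.dim {x + y |x y. x \<in> A \<and> y \<in> B} + vec.dim (A \<inter> B) = vec.dim A + vec.dim B"
    by (rule vec.dim_sums_Int[OF sA sB])
  have "vec.dim (A \<inter> B) = 0" using AB by simp
  with e1 dA dB have d2k: "vec.dim {x + y |x y. x \<in> A \<and> y \<in> B} = 2 * k" by simp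
  have "{x + y |x y. x \<in> A \<and> y \<in> B} \<subseteq> {x + y |x y. x \<in> U \<and> y \<in> B}" using AU by blast
  then have g: "2 * k \<le> vec.dim {x + y |x y. x \<in> U \<and> y \<in> B}" unfolding d2k[symmetric] by (rule vec.dim_subset)
  have e2: "vec.dim {x + y |x y. x \<in> U \<and> y \<in> B} + vec.dim (U \<inter> B) = vec.dim U + vec.dim B"
    by (rule vec.dim_sums_Int[OF sU sB])
  have h1: "vec.dim (U \<inter> B) + k \<le> m" using e2 g dU dB by linarith
  have sUV: "vec.subspace (U \<inter> V)" using sU sV by (rule vec.subspace_inter)
  have e3: "vec.dim {x + y |x y. x \<in> U \<inter> V \<and> y \<in> B} + vec.dim ((U \<inter> V) \<inter> B) = vec.dim (U \<inter> V) + vec.dim B"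
    by (rule vec.dim_sums_Int[OF sUV sB])
  have "{x + y |x y. x \<in> U \<inter> V \<and> y \<in> B} \<subseteq> V"
  proof
    fix z assume "z \<in> {x + y |x y. x \<in> U \<inter> V \<and> y \<in> B}"
    then obtain x y where "z = x + y" "x \<in> V" "y \<in> V" using BV by blast
    then show "z \<in> V" using vec.subspace_add[OF sV] by simp
  qed
  then have "vec.dim {x + y |x y. x \<in> U \<inter> V \<and> y \<in> B} \<le> vec.dim V" by (rule vec.dim_subset)
  then have "vec.dim {x + y |x y. x \<in> U \<inter> V \<and> y \<in> B} \<le> m" using dV by linarith
  moreover have ie: "(U \<inter> V) \<inter> B = U \<inter> B" using BV by blast
  moreover have "vec.dim {x + y |x y. x \<in> U \<inter> V \<and> y \<in> B} + vec.dim (U \<inter> B) = vec.dim (U \<inter> V) + vec.dim B"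
    using e3 unfolding ie .
  ultimately show ?thesis using h1 dB by linarith
qed

theorem proposition4p13:
  fixes S :: "nat \<Rightarrow> nat \<Rightarrow> 'a::{finite,field}^'n"
    and X :: "nat \<Rightarrow> ('a^'n) set"
    and k i0 m :: nat
  assumes k2: "k \<ge> 2"
    and dimn: "CARD('n) = 2 * k"
    and spread: "is_spread_gen k S"
    and i0: "i0 \<in> {1..CARD('a)^k+1}"
    and Xsub: "\<forall>j\<in>{1..2*k-1}. vec.subspace (X j) \<and> X j \<subseteq> Wsub k S i0 j"
    and Xzero: "\<forall>j\<in>{1..k}. X j = {0}"
    and m: "m \<in> {k+1..2*k-1}"
    and dimm: "vec.dim (X m) > 2 * (m - k)"
    and minm: "\<forall>j\<in>{k+1..<m}. vec.dim (X j) \<le> 2 * (j - k)"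
  shows "\<forall>i\<in>{1..CARD('a)^k+1}. X m \<subseteq> Wsub k S i m \<longleftrightarrow>
           (\<forall>j\<in>{1..2*k-1}. Wsub k S i j = Wsub k S i0 j)"
proof (intro ballI, rule iffI)
  fix i assume i: "i \<in> {1..CARD('a)^k+1}" and XU: "X m \<subseteq> Wsub k S i m"
  have mj: "m \<in> {1..2*k-1}" using m by auto
  have XV: "X m \<subseteq> Wsub k S i0 m" using Xsub mj by blast
  have "i = i0"
  proof (rule ccontr)
    assume ne: "i \<noteq> i0"
    have km: "k \<le> m" using m by auto
    have sp1: "\<forall>i\<in>{1..CARD('a)^k+1}. vec.dim (row_space (S i) k) = k"
      and sp2: "\<forall>i\<in>{1..CARD('a)^k+1}. \<forall>i'\<in>{1..CARD('a)^k+1}. i \<noteq> i' \<longrightarrow>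
        row_space (S i) k \<inter> row_space (S i') k = {0}"
      using spread unfolding is_spread_gen_def by blast+
    have sR: "vec.subspace (row_space (S j) k)" for j unfolding row_space_def by (rule vec.subspace_span)
    have "vec.dim (Wsub k S i m \<inter> Wsub k S i0 m) \<le> 2 * (m - k)"
      by (rule key_dim[where U="Wsub k S i m" and V="Wsub k S i0 m" and A="row_space (S i) k" and B="row_space (S i0) k", OF Wsub_sub Wsub_sub sR sR Wsub_contains[OF km] Wsub_contains[OF km]
          sp2[rule_format, OF i i0 ne] sp1[rule_format, OF i] sp1[rule_format, OF i0] Wsub_dim Wsub_dim])
    moreover have "vec.dim (X m) \<le> vec.dim (Wsub k S i m \<inter> Wsub k S i0 m)"
      using XU XV by (intro vec.dim_subset) blast
    ultimately show False using dimm by linarith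
  qed
  then show "\<forall>j\<in>{1..2*k-1}. Wsub k S i j = Wsub k S i0 j" by simp
next
  fix i assume "i \<in> {1..CARD('a)^k+1}" and eq: "\<forall>j\<in>{1..2*k-1}. Wsub k S i j = Wsub k S i0 j"
  have mj: "m \<in> {1..2*k-1}" using m by auto
  then show "X m \<subseteq> Wsub k S i m" using Xsub eq by blast
qed

end
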